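(* Let $q_1,q_2$ be probability densities with respect to a base measure $\mu$ on a common support $\Omega$, with $q_1(\omega)>0$ and $q_2(\omega)>0$ for all $\omega\in\Omega$. Let $\tilde q_i=Z_i q_i$ ($i=1,2$), where $Z_i>0$ are the normalizing constants, and let $r=Z_1/Z_2$. Let $\pi\in(0,1)$ and let $0<C_1<C_2$ be constants with $r\in[C_1,C_2]$. For $\tilde r\in[C_1,C_2]$ define $$G_\pi(\tilde r)=1-\frac{1}{\pi}E_{q_1}\!\left[\left(\frac{\pi\tilde q_2(\omega)\tilde r}{(1-\pi)\tilde q_1(\omega)+\pi\tilde q_2(\omega)\tilde r}\right)^{2}\right]-\frac{1}{1-\pi}E_{q_2}\!\left[\left(\frac{(1-\pi)\tilde q_1(\omega)}{(1-\pi)\tilde q_1(\omega)+\pi\tilde q_2(\omega)\tilde r}\right)^{2}\right].$$ Then $H_\pi(q_1,q_2)\ge \sup_{\tilde r\in[C_1,C_2]}G_\pi(\tilde r)$, and $G_\pi(\tilde r)=H_\pi(q_1,q_2)$ if and only if $\tilde r=r$. Moreover, let $\{\omega_{1j}\}_{j=1}^{n_1}$ be i.i.d. from $q_1$ and $\{\omega_{2j}\}_{j=1}^{n_2}$ be i.i.d. from $q_2$, and let $\hat G_\pi(\tilde r)$ be the empirical version of $G_\pi(\tilde r)$ obtained by replacing $E_{q_1}$ by the sample average over $\{\omega_{1j}\}$ and $E_{q_2}$ by the sample average over $\{\omega_{2j}\}$. If $\hat r_\pi\in\arg\max_{\tilde r\in[C_1,C_2]}\hat G_\pi(\tilde r)$,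 then $\hat r_\pi\to r$ in probability and $\hat G_\pi(\hat r_\pi)\to H_\pi(q_1,q_2)$ in probability as $n_1,n_2\to\infty$.
   Context: The weighted harmonic divergence with weight $\pi\in(0,1)$ is $H_\pi(q_1,q_2)=1-\int_\Omega\left(\pi q_1(\omega)^{-1}+(1-\pi)q_2(\omega)^{-1}\right)^{-1}d\mu(\omega)$. It is the $f$-divergence $D_f(q_1,q_2)=\int_\Omega f(q_1/q_2)\,q_2\,d\mu$ with generator $f(u)=1-\frac{u}{\pi+(1-\pi)u}$. Only the unnormalized densities $\tilde q_1,\tilde q_2$ are assumed evaluable. *)

theory Defs
  imports "HOL-Probability.Probability"
begin

definition harmonic_div :: "'a measure \<Rightarrow> real \<Rightarrow> ('a \<Rightarrow> real) \<Rightarrow> ('a \<Rightarrow> real) \<Rightarrow> real" where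
  "harmonic_div M p q1 q2 =
     1 - (\<integral>\<omega>. inverse (p * inverse (q1 \<omega>) + (1 - p) * inverse (q2 \<omega>)) \<partial>M)"

definition hterm1 :: "real \<Rightarrow> ('a \<Rightarrow> real) \<Rightarrow> ('a \<Rightarrow> real) \<Rightarrow> real \<Rightarrow> 'a \<Rightarrow> real" where
  "hterm1 p qt1 qt2 rt \<omega> =
     ((p * qt2 \<omega> * rt) / ((1 - p) * qt1 \<omega> + p * qt2 \<omega> * rt))\<^sup>2"

definition hterm2 :: "real \<Rightarrow> ('a \<Rightarrow> real) \<Rightarrow> ('a \<Rightarrow> real) \<Rightarrow> real \<Rightarrow> 'a \<Rightarrow> real" where
  "hterm2 p qt1 qt2 rt \<omega> =
     (((1 - p) * qt1 \<omega>) / ((1 - p) * qt1 \<omega> + p * qt2 \<omega> * rt))\<^sup>2"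

definition G_pi :: "'a measure \<Rightarrow> real \<Rightarrow> ('a \<Rightarrow> real) \<Rightarrow> ('a \<Rightarrow> real) \<Rightarrow>
    ('a \<Rightarrow> real) \<Rightarrow> ('a \<Rightarrow> real) \<Rightarrow> real \<Rightarrow> real" where
  "G_pi M p q1 q2 qt1 qt2 rt =
     1 - (1 / p) * (\<integral>\<omega>. q1 \<omega> * hterm1 p qt1 qt2 rt \<omega> \<partial>M)
       - (1 / (1 - p)) * (\<integral>\<omega>. q2 \<omega> * hterm2 p qt1 qt2 rt \<omega> \<partial>M)"

definition Ghat_pi :: "real \<Rightarrow> ('a \<Rightarrow> real) \<Rightarrow> ('a \<Rightarrow> real) \<Rightarrow>
    nat \<Rightarrow> (nat \<Rightarrow> 'a) \<Rightarrow> nat \<Rightarrow> (nat \<Rightarrow> 'a) \<Rightarrow> real \<Rightarrow> real" where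
  "Ghat_pi p qt1 qt2 n1 xs1 n2 xs2 rt =
     1 - (1 / p) * ((\<Sum>j<n1. hterm1 p qt1 qt2 rt (xs1 j)) / real n1)
       - (1 / (1 - p)) * ((\<Sum>j<n2. hterm2 p qt1 qt2 rt (xs2 j)) / real n2)"

end

theory Submission imports Defs "HOL-Probability.Hoeffding" "HOL-Real_Asymp.Real_Asymp" begin


lemma wlln01:
  fixes X :: "nat \<Rightarrow> 'p \<Rightarrow> 'a" and q f :: "'a \<Rightarrow> real"
  assumes P: "prob_space P"
    and Xm: "\<And>j. X j \<in> measurable P M"
    and ind: "prob_space.indep_vars P (\<lambda>_. M) X UNIV"
    and Xd: "\<And>j. distr P M (X j) = density M (\<lambda>\<omega>. ennreal (q \<omega>))"
    and qm: "q \<in> borel_measurable M" and qnn: "\<And>\<omega>. \<omega> \<in> space M \<Longrightarrow> q \<omega> \<ge> 0"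
    and fm: "f \<in> borel_measurable M" and f01: "\<And>\<omega>. \<omega> \<in> space M \<Longrightarrow> f \<omega> \<in> {0..1}"
    and eta: "\<eta> > 0"
  shows "((\<lambda>n. measure P {x\<in>space P. \<eta> \<le> \<bar>(\<Sum>j<n. f (X j x)) / real n - (\<integral>\<omega>. q \<omega> * f \<omega> \<partial>M)\<bar>}) \<longlongrightarrow> 0) sequentially"
proof -
  interpret prob_space P by (rule P)
  have fXm[measurable]: "(\<lambda>x. f (X j x)) \<in> borel_measurable P" for j
    using measurable_compose[OF Xm fm] by (simp add: comp_def)
  have E: "expectation (\<lambda>x. f (X 0 x)) = (\<integral>\<omega>. q \<omega> * f \<omega> \<partial>M)"
  proof -
    have "expectation (\<lambda>x. f (X 0 x)) = integral\<^sup>L (distr P M (X 0)) f"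
      by (rule integral_distr[symmetric, OF Xm fm])
    also have "\<dots> = integral\<^sup>L (density M (\<lambda>\<omega>. ennreal (q \<omega>))) f" by (simp add: Xd)
    also have "\<dots> = (\<integral>\<omega>. q \<omega> * f \<omega> \<partial>M)"
    proof -
      have "AE x in M. 0 \<le> q x" using qnn by (intro AE_I2) auto
      then show ?thesis using integral_density[OF fm qm] by simp
    qed
    finally show ?thesis .
  qed
  have bound: "measure P {x\<in>space P. \<eta> \<le> \<bar>(\<Sum>j<n. f (X j x)) / real n - (\<integral>\<omega>. q \<omega> * f \<omega> \<partial>M)\<bar>}
      \<le> 2 * exp (-2 * real n * \<eta>\<^sup>2)" if n: "n > 0" for n
  proof -
    have ind2: "indep_vars (\<lambda>_. borel) (\<lambda>j x. f (X j x)) {..<n}"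
      by (rule indep_vars_subset[OF indep_vars_compose2[OF ind]]) (use fm in auto)
    have dX: "distr P borel (\<lambda>x. f (X i x)) = distr P borel (\<lambda>x. f (X 0 x))" for i
    proof -
      have "distr P borel (\<lambda>x. f (X i x)) = distr (distr P M (X i)) borel f"
        using distr_distr[OF fm Xm, of i] by (simp add: comp_def)
      also have "\<dots> = distr (distr P M (X 0)) borel f" by (simp add: Xd)
      also have "\<dots> = distr P borel (\<lambda>x. f (X 0 x))"
        using distr_distr[OF fm Xm, of 0] by (simp add: comp_def)
      finally show ?thesis .
    qed
    have AEb: "AE x in P. f (X 0 x) \<in> {0..1}"
      using f01 measurable_space[OF Xm] by (intro AE_I2) auto
    have H: "Hoeffding_ineq_iid P {..<n} (\<lambda>j x. f (X j x)) (\<lambda>x. f (X 0 x)) 0 1"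
      unfolding Hoeffding_ineq_iid_def iid_interval_bounded_random_variables_def
        iid_interval_bounded_random_variables_axioms_def
      using P ind2 dX AEb fXm[of 0] by blast
    have "prob {x\<in>space P. \<eta> \<le> \<bar>(\<Sum>i\<in>{..<n}. f (X i x)) / real (card {..<n}) - expectation (\<lambda>x. f (X 0 x))\<bar>}
         \<le> 2 * exp (-2 * real (card {..<n}) * \<eta>\<^sup>2 / (1 - 0)\<^sup>2)"
      using Hoeffding_ineq_iid.Hoeffding_ineq_abs_ge'[OF H, of \<eta>] eta n by auto
    then show ?thesis using E by simp
  qed
  have lim: "((\<lambda>n. 2 * exp (-2 * real n * \<eta>\<^sup>2)) \<longlongrightarrow> 0) sequentially"
    using eta by real_asymp
  show ?thesis
    by (rule tendsto_sandwich[OF _ _ tendsto_const lim])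
       (use bound in \<open>auto intro!: eventually_mono[OF eventually_gt_at_top[of 0]]\<close>)
qed


lemma diff_formula:
  fixes q1 q2 Z1 Z2 p rt :: real
  assumes "q1 > 0" "q2 > 0" "Z1 > 0" "Z2 > 0" "0 < p" "p < 1" "rt > 0"
  defines "D \<equiv> (1-p)*(Z1*q1) + p*(Z2*q2)*rt"
  shows "q1 * ((p*(Z2*q2)*rt)/D)\<^sup>2 / p + q2 * (((1-p)*(Z1*q1))/D)\<^sup>2 / (1-p)
          - inverse (p * inverse q1 + (1-p) * inverse q2)
       = p*(1-p)*q1\<^sup>2*q2\<^sup>2*(Z2*rt - Z1)\<^sup>2 / (D\<^sup>2 * (p*q2 + (1-p)*q1))"
proof -
  have D: "D > 0" unfolding D_def using assms by (intro add_pos_pos mult_pos_pos) auto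
  have A: "p*q2 + (1-p)*q1 > 0" using assms by (intro add_pos_pos mult_pos_pos) auto
  have inv: "inverse (p * inverse q1 + (1-p) * inverse q2) = q1*q2/(p*q2 + (1-p)*q1)"
    using assms A by (simp add: field_simps)
  have p1: "1 - p \<noteq> 0" using assms by simp
  have D_ne: "D \<noteq> 0" using D by simp
  have L1g: "q1 * ((p*(Z2*q2)*rt)/E)\<^sup>2 / p + q2 * (((1-p)*(Z1*q1))/E)\<^sup>2 / (1-p)
      = (q1*p*(Z2*q2*rt)\<^sup>2 + q2*(1-p)*(Z1*q1)\<^sup>2) / E\<^sup>2" if "E \<noteq> 0" for E
    using that p1 assms by (simp add: field_simps power2_eq_square)
  note L1 = L1g[of D]
  have L2g: "N / E\<^sup>2 - q1*q2/AA = (N*AA - q1*q2*E\<^sup>2)/(E\<^sup>2 * AA)" if "E \<noteq> 0" "AA \<noteq> 0" for N E AA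
    using that by (simp add: field_simps)
  have L2: "N / D\<^sup>2 - q1*q2/(p*q2 + (1-p)*q1) = (N*(p*q2 + (1-p)*q1) - q1*q2*D\<^sup>2)/(D\<^sup>2 * (p*q2 + (1-p)*q1))" for N
    using L2g[of D "p*q2 + (1-p)*q1" N] D A by simp
  have L3: "(q1*p*(Z2*q2*rt)\<^sup>2 + q2*(1-p)*(Z1*q1)\<^sup>2)*(p*q2 + (1-p)*q1) - q1*q2*D\<^sup>2
     = p*(1-p)*q1\<^sup>2*q2\<^sup>2*(Z2*rt - Z1)\<^sup>2"
    unfolding D_def by (simp add: power2_eq_square algebra_simps)
  show ?thesis using D unfolding inv L1[OF D_ne] L2 L3 by simp
qed

lemma frac_lip:
  fixes a b u v c :: real
  assumes "a > 0" "b > 0" "c > 0" "u \<ge> c" "v \<ge> c"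
  shows "\<bar>(b* u)/(a+b* u) - (b * v)/(a+b * v)\<bar> \<le> \<bar>u - v\<bar> / c"
proof -
  have pu: "a + b* u > 0" "a + b * v > 0" using assms by (auto intro!: add_pos_pos mult_pos_pos)
  have eq: "b* u/(a+b* u) - b * v/(a+b * v) = a*b*(u-v)/((a+b* u)*(a+b * v))"
    using pu by (simp add: field_simps)
  have le: "a*b*c \<le> (a+b* u)*(a+b * v)"
  proof -
    have "a*b*c \<le> a*(b * v)" using assms by (simp add: mult_left_mono)
    also have "\<dots> \<le> (a+b* u)*(b * v)"
      using assms by (intro mult_right_mono) (auto intro!: add_nonneg_nonneg)
    also have "\<dots> \<le> (a+b* u)*(a+b * v)" using assms pu by (intro mult_left_mono) auto
    finally show ?thesis .
  qed
  have "\<bar>a*b*(u-v)/((a+b* u)*(a+b * v))\<bar> = a*b*\<bar>u-v\<bar>/((a+b* u)*(a+b * v))"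
    using assms pu by (simp add: abs_mult abs_divide)
  also have "\<dots> \<le> a*b*\<bar>u-v\<bar>/(a*b*c)"
    using assms pu le by (intro divide_left_mono) auto
  also have "\<dots> = \<bar>u - v\<bar> / c" using assms by simp
  finally show ?thesis using eq by simp
qed

lemma sq_lip:
  fixes x y :: real
  assumes "x \<in> {0..1}" "y \<in> {0..1}"
  shows "\<bar>x\<^sup>2 - y\<^sup>2\<bar> \<le> 2 * \<bar>x - y\<bar>"
proof -
  have "\<bar>x\<^sup>2 - y\<^sup>2\<bar> = \<bar>x - y\<bar> * \<bar>x + y\<bar>" by (simp add: power2_eq_square algebra_simps abs_mult[symmetric])
  also have "\<dots> \<le> \<bar>x - y\<bar> * 2" using assms by (intro mult_left_mono) auto
  finally show ?thesis by simp
qed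

lemma hterm_ab:
  fixes a b rt s C1 :: real
  assumes a: "a > 0" and b: "b > 0" and "C1 > 0" "rt \<ge> C1" "s \<ge> C1"
  shows "(b*rt/(a + b*rt))\<^sup>2 \<in> {0..1}"
    and "(a/(a + b*rt))\<^sup>2 \<in> {0..1}"
    and "\<bar>(b*rt/(a + b*rt))\<^sup>2 - (b* s/(a + b* s))\<^sup>2\<bar> \<le> 2/C1 * \<bar>rt - s\<bar>"
    and "\<bar>(a/(a + b*rt))\<^sup>2 - (a/(a + b* s))\<^sup>2\<bar> \<le> 2/C1 * \<bar>rt - s\<bar>"
proof -
  have rt: "rt > 0" "s > 0" using assms by auto
  have f01: "b* u/(a+b* u) \<in> {0..1}" if "u > 0" for u
  proof -
    have "b*u > 0" using b that by simp
    moreover have "a + b*u > 0" using a b that by (simp add: add_pos_pos)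
    ultimately show ?thesis using a by (auto simp: divide_le_eq)
  qed
  have g01: "a/(a+b* u) \<in> {0..1}" if "u > 0" for u
  proof -
    have "b*u > 0" using b that by simp
    moreover have "a + b*u > 0" using a b that by (simp add: add_pos_pos)
    ultimately show ?thesis using a by (auto simp: divide_le_eq)
  qed
  have gf: "a/(a+b* u) = 1 - b* u/(a+b* u)" if "u > 0" for u
  proof -
    have "a + b*u > 0" using a b that by (simp add: add_pos_pos)
    then have "a + b*u \<noteq> 0" by simp
    then show ?thesis by (simp add: field_simps)
  qed
  have sq01: "x\<^sup>2 \<in> {0..1}" if "x \<in> {0..1}" for x :: real
    using that by (auto simp: power_le_one)
  show "(b*rt/(a + b*rt))\<^sup>2 \<in> {0..1}"
    using sq01[OF f01[OF rt(1)]] .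
  show "(a/(a + b*rt))\<^sup>2 \<in> {0..1}"
    using sq01[OF g01[OF rt(1)]] .
  have lipf: "\<bar>b*rt/(a+b*rt) - b* s/(a+b* s)\<bar> \<le> \<bar>rt - s\<bar> / C1"
    by (rule frac_lip) (use a b assms in auto)
  show "\<bar>(b*rt/(a + b*rt))\<^sup>2 - (b* s/(a + b* s))\<^sup>2\<bar> \<le> 2/C1 * \<bar>rt - s\<bar>"
    using sq_lip[OF f01[OF rt(1)] f01[OF rt(2)]] lipf by simp
  have lipg: "\<bar>a/(a+b*rt) - a/(a+b* s)\<bar> \<le> \<bar>rt - s\<bar> / C1"
    using lipf unfolding gf[OF rt(1)] gf[OF rt(2)] by simp
  show "\<bar>(a/(a + b*rt))\<^sup>2 - (a/(a + b* s))\<^sup>2\<bar> \<le> 2/C1 * \<bar>rt - s\<bar>"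
    using sq_lip[OF g01[OF rt(1)] g01[OF rt(2)]] lipg by simp
qed

lemma hterm_facts:
  fixes p A B rt s C1 :: real
  assumes "0 < p" "p < 1" "A > 0" "B > 0" "C1 > 0" "rt \<ge> C1" "s \<ge> C1"
  shows "((p*B*rt)/((1-p)*A + p*B*rt))\<^sup>2 \<in> {0..1}"
    and "(((1-p)*A)/((1-p)*A + p*B*rt))\<^sup>2 \<in> {0..1}"
    and "\<bar>((p*B*rt)/((1-p)*A + p*B*rt))\<^sup>2 - ((p*B* s)/((1-p)*A + p*B* s))\<^sup>2\<bar> \<le> 2/C1 * \<bar>rt - s\<bar>"
    and "\<bar>(((1-p)*A)/((1-p)*A + p*B*rt))\<^sup>2 - (((1-p)*A)/((1-p)*A + p*B* s))\<^sup>2\<bar> \<le> 2/C1 * \<bar>rt - s\<bar>"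
proof -
  have a: "(1-p)*A > 0" and b: "p*B > 0" using assms by auto
  note H = hterm_ab[OF a b assms(5-7)]
  show "((p*B*rt)/((1-p)*A + p*B*rt))\<^sup>2 \<in> {0..1}" by (rule H(1))
  show "(((1-p)*A)/((1-p)*A + p*B*rt))\<^sup>2 \<in> {0..1}" by (rule H(2))
  show "\<bar>((p*B*rt)/((1-p)*A + p*B*rt))\<^sup>2 - ((p*B* s)/((1-p)*A + p*B* s))\<^sup>2\<bar> \<le> 2/C1 * \<bar>rt - s\<bar>" by (rule H(3))
  show "\<bar>(((1-p)*A)/((1-p)*A + p*B*rt))\<^sup>2 - (((1-p)*A)/((1-p)*A + p*B* s))\<^sup>2\<bar> \<le> 2/C1 * \<bar>rt - s\<bar>" by (rule H(4))
qed



lemma prod_lim: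
  fixes T :: "nat \<Rightarrow> nat \<Rightarrow> 'p set" and Ba Bb :: "nat \<Rightarrow> 'b \<Rightarrow> 'p set"
  assumes P: "finite_measure P" and S: "finite S"
    and Bam: "\<And>n s. s \<in> S \<Longrightarrow> Ba n s \<in> sets P"
    and Bbm: "\<And>n s. s \<in> S \<Longrightarrow> Bb n s \<in> sets P"
    and sub: "\<And>n1 n2. T n1 n2 \<subseteq> (\<Union>s\<in>S. Ba n1 s) \<union> (\<Union>s\<in>S. Bb n2 s)"
    and l1: "\<And>s. s \<in> S \<Longrightarrow> ((\<lambda>n. measure P (Ba n s)) \<longlongrightarrow> 0) sequentially"
    and l2: "\<And>s. s \<in> S \<Longrightarrow> ((\<lambda>n. measure P (Bb n s)) \<longlongrightarrow> 0) sequentially"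
  shows "((\<lambda>(n1, n2). measure P (T n1 n2)) \<longlongrightarrow> 0) (sequentially \<times>\<^sub>F sequentially)"
proof -
  interpret finite_measure P by (rule P)
  let ?b = "\<lambda>(n1, n2). (\<Sum>s\<in>S. measure P (Ba n1 s)) + (\<Sum>s\<in>S. measure P (Bb n2 s))"
  have bnd: "measure P (T n1 n2) \<le> (\<Sum>s\<in>S. measure P (Ba n1 s)) + (\<Sum>s\<in>S. measure P (Bb n2 s))" for n1 n2
  proof -
    have U1: "(\<Union>s\<in>S. Ba n1 s) \<in> sets P" using S Bam by auto
    have U2: "(\<Union>s\<in>S. Bb n2 s) \<in> sets P" using S Bbm by auto
    have "measure P (T n1 n2) \<le> measure P ((\<Union>s\<in>S. Ba n1 s) \<union> (\<Union>s\<in>S. Bb n2 s))"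
      by (rule finite_measure_mono[OF sub]) (use U1 U2 in auto)
    also have "\<dots> \<le> measure P (\<Union>s\<in>S. Ba n1 s) + measure P (\<Union>s\<in>S. Bb n2 s)"
      by (rule measure_Un_le[OF U1 U2])
    also have "\<dots> \<le> (\<Sum>s\<in>S. measure P (Ba n1 s)) + (\<Sum>s\<in>S. measure P (Bb n2 s))"
      by (intro add_mono measure_UNION_le S) (auto intro: Bam Bbm)
    finally show ?thesis .
  qed
  have t1: "((\<lambda>x. measure P (Ba (fst x) s)) \<longlongrightarrow> 0) (sequentially \<times>\<^sub>F sequentially)" if "s \<in> S" for s
    by (rule filterlim_compose[OF l1[OF that] filterlim_fst])
  have t2: "((\<lambda>x. measure P (Bb (snd x) s)) \<longlongrightarrow> 0) (sequentially \<times>\<^sub>F sequentially)" if "s \<in> S" for s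
    by (rule filterlim_compose[OF l2[OF that] filterlim_snd])
  have "((\<lambda>x. (\<Sum>s\<in>S. measure P (Ba (fst x) s)) + (\<Sum>s\<in>S. measure P (Bb (snd x) s))) \<longlongrightarrow> 0 + 0)
      (sequentially \<times>\<^sub>F sequentially)"
    by (intro tendsto_add tendsto_null_sum t1 t2)
  then have lim: "(?b \<longlongrightarrow> 0) (sequentially \<times>\<^sub>F sequentially)"
  proof -
    have "?b = (\<lambda>x. (\<Sum>s\<in>S. measure P (Ba (fst x) s)) + (\<Sum>s\<in>S. measure P (Bb (snd x) s)))"
      by (auto simp: fun_eq_iff)
    with \<open>(_ \<longlongrightarrow> 0 + 0) _\<close> show ?thesis by simp
  qed
  show ?thesis
    by (rule tendsto_sandwich[OF _ _ tendsto_const lim]) (auto simp: bnd split: prod.splits intro!: always_eventually)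
qed

theorem proposition1:
  fixes M :: "'a measure" and P :: "'p measure"
    and q1 q2 qt1 qt2 :: "'a \<Rightarrow> real"
    and Z1 Z2 p C1 C2 :: real
    and X1 X2 :: "nat \<Rightarrow> 'p \<Rightarrow> 'a"
    and rhat :: "nat \<Rightarrow> nat \<Rightarrow> 'p \<Rightarrow> real"
  assumes q1_meas: "q1 \<in> borel_measurable M" and q2_meas: "q2 \<in> borel_measurable M"
    and q1_pos: "\<And>\<omega>. \<omega> \<in> space M \<Longrightarrow> q1 \<omega> > 0"
    and q2_pos: "\<And>\<omega>. \<omega> \<in> space M \<Longrightarrow> q2 \<omega> > 0"
    and q1_norm: "(\<integral>\<^sup>+\<omega>. ennreal (q1 \<omega>) \<partial>M) = 1"
    and q2_norm: "(\<integral>\<^sup>+\<omega>. ennreal (q2 \<omega>) \<partial>M) = 1"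
    and Z1_pos: "Z1 > 0" and Z2_pos: "Z2 > 0"
    and qt1_def: "\<And>\<omega>. \<omega> \<in> space M \<Longrightarrow> qt1 \<omega> = Z1 * q1 \<omega>"
    and qt2_def: "\<And>\<omega>. \<omega> \<in> space M \<Longrightarrow> qt2 \<omega> = Z2 * q2 \<omega>"
    and p_range: "0 < p" "p < 1"
    and C_range: "0 < C1" "C1 < C2"
    and r_range: "Z1 / Z2 \<in> {C1..C2}"
    and P_prob: "prob_space P"
    and X1_meas: "\<And>j. X1 j \<in> measurable P M"
    and X2_meas: "\<And>j. X2 j \<in> measurable P M"
    and X1_indep: "prob_space.indep_vars P (\<lambda>_. M) X1 UNIV"
    and X2_indep: "prob_space.indep_vars P (\<lambda>_. M) X2 UNIV"
    and X1_distr: "\<And>j. distr P M (X1 j) = density M (\<lambda>\<omega>. ennreal (q1 \<omega>))"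
    and X2_distr: "\<And>j. distr P M (X2 j) = density M (\<lambda>\<omega>. ennreal (q2 \<omega>))"
    and rhat_meas: "\<And>n1 n2. rhat n1 n2 \<in> borel_measurable P"
    and rhat_range: "\<And>n1 n2 x. x \<in> space P \<Longrightarrow> rhat n1 n2 x \<in> {C1..C2}"
    and rhat_argmax: "\<And>n1 n2 x rt. x \<in> space P \<Longrightarrow> rt \<in> {C1..C2} \<Longrightarrow>
        Ghat_pi p qt1 qt2 n1 (\<lambda>j. X1 j x) n2 (\<lambda>j. X2 j x) rt
          \<le> Ghat_pi p qt1 qt2 n1 (\<lambda>j. X1 j x) n2 (\<lambda>j. X2 j x) (rhat n1 n2 x)"
  shows "harmonic_div M p q1 q2 \<ge> (SUP rt\<in>{C1..C2}. G_pi M p q1 q2 qt1 qt2 rt)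
    \<and> (\<forall>rt\<in>{C1..C2}. G_pi M p q1 q2 qt1 qt2 rt = harmonic_div M p q1 q2 \<longleftrightarrow> rt = Z1 / Z2)
    \<and> (\<forall>\<epsilon>>0. ((\<lambda>(n1, n2). measure P {x \<in> space P. \<epsilon> < \<bar>rhat n1 n2 x - Z1 / Z2\<bar>})
                  \<longlongrightarrow> 0) (sequentially \<times>\<^sub>F sequentially))
    \<and> (\<forall>\<epsilon>>0. ((\<lambda>(n1, n2). measure P {x \<in> space P. \<epsilon> <
                  \<bar>Ghat_pi p qt1 qt2 n1 (\<lambda>j. X1 j x) n2 (\<lambda>j. X2 j x) (rhat n1 n2 x)
                     - harmonic_div M p q1 q2\<bar>})
                  \<longlongrightarrow> 0) (sequentially \<times>\<^sub>F sequentially))"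
  proof -
  interpret P: prob_space P by (rule P_prob)
  define r where "r = Z1 / Z2"
  define L where "L = 2 / C1"
  define h where "h = (\<lambda>\<omega>. inverse (p * inverse (q1 \<omega>) + (1 - p) * inverse (q2 \<omega>)))"
  define E1 where "E1 = (\<lambda>rt. \<integral>\<omega>. q1 \<omega> * hterm1 p qt1 qt2 rt \<omega> \<partial>M)"
  define E2 where "E2 = (\<lambda>rt. \<integral>\<omega>. q2 \<omega> * hterm2 p qt1 qt2 rt \<omega> \<partial>M)"
  define A1 where "A1 = (\<lambda>n rt x. (\<Sum>j<n. hterm1 p qt1 qt2 rt (X1 j x)) / real n)"
  define A2 where "A2 = (\<lambda>n rt x. (\<Sum>j<n. hterm2 p qt1 qt2 rt (X2 j x)) / real n)"
  define G where "G = G_pi M p q1 q2 qt1 qt2"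
  define H where "H = harmonic_div M p q1 q2"
  have r_pos: "r > 0" using Z1_pos Z2_pos by (simp add: r_def)
  have L_pos: "L > 0" using C_range by (simp add: L_def)
  note [measurable] = q1_meas q2_meas X1_meas X2_meas
  have qt1m[measurable]: "qt1 \<in> borel_measurable M"
  proof -
    have "(\<lambda>\<omega>. Z1 * q1 \<omega>) \<in> borel_measurable M" by measurable
    then show ?thesis by (rule measurable_cong[THEN iffD1, rotated]) (simp add: qt1_def)
  qed
  have qt2m[measurable]: "qt2 \<in> borel_measurable M"
  proof -
    have "(\<lambda>\<omega>. Z2 * q2 \<omega>) \<in> borel_measurable M" by measurable
    then show ?thesis by (rule measurable_cong[THEN iffD1, rotated]) (simp add: qt2_def)
  qed
  have h1m[measurable]: "hterm1 p qt1 qt2 rt \<in> borel_measurable M" for rt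
    unfolding hterm1_def by measurable
  have h2m[measurable]: "hterm2 p qt1 qt2 rt \<in> borel_measurable M" for rt
    unfolding hterm2_def by measurable
  have hm[measurable]: "h \<in> borel_measurable M" unfolding h_def by measurable
  have qt_pos: "qt1 \<omega> > 0" "qt2 \<omega> > 0" if "\<omega> \<in> space M" for \<omega>
    using qt1_def[OF that] qt2_def[OF that] q1_pos[OF that] q2_pos[OF that] Z1_pos Z2_pos by auto
  have hfacts: "hterm1 p qt1 qt2 rt \<omega> \<in> {0..1} \<and> hterm2 p qt1 qt2 rt \<omega> \<in> {0..1}
      \<and> \<bar>hterm1 p qt1 qt2 rt \<omega> - hterm1 p qt1 qt2 s \<omega>\<bar> \<le> L * \<bar>rt - s\<bar>
      \<and> \<bar>hterm2 p qt1 qt2 rt \<omega> - hterm2 p qt1 qt2 s \<omega>\<bar> \<le> L * \<bar>rt - s\<bar>"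
    if "\<omega> \<in> space M" "rt \<in> {C1..C2}" "s \<in> {C1..C2}" for \<omega> rt s
    using hterm_facts[of p "qt1 \<omega>" "qt2 \<omega>" C1 rt s] p_range C_range qt_pos[OF that(1)] that(2,3)
    unfolding hterm1_def hterm2_def L_def by auto
  have q1_int: "integrable M q1"
    by (rule integrableI_nonneg) (use q1_norm q1_pos in \<open>auto intro!: AE_I2 less_imp_le\<close>)
  have q2_int: "integrable M q2"
    by (rule integrableI_nonneg) (use q2_norm q2_pos in \<open>auto intro!: AE_I2 less_imp_le\<close>)
  have q1_one: "(\<integral>\<omega>. q1 \<omega> \<partial>M) = 1"
    using integral_eq_nn_integral[of q1 M] q1_norm q1_pos by (auto intro!: AE_I2 less_imp_le)
  have q2_one: "(\<integral>\<omega>. q2 \<omega> \<partial>M) = 1"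
    using integral_eq_nn_integral[of q2 M] q2_norm q2_pos by (auto intro!: AE_I2 less_imp_le)
  have I1: "integrable M (\<lambda>\<omega>. q1 \<omega> * hterm1 p qt1 qt2 rt \<omega>)" if "rt \<in> {C1..C2}" for rt
    by (rule Bochner_Integration.integrable_bound[OF q1_int]) (use hfacts[OF _ that that] q1_pos in \<open>auto intro!: AE_I2 simp: abs_mult intro!: mult_left_le\<close>)
  have I2: "integrable M (\<lambda>\<omega>. q2 \<omega> * hterm2 p qt1 qt2 rt \<omega>)" if "rt \<in> {C1..C2}" for rt
    by (rule Bochner_Integration.integrable_bound[OF q2_int]) (use hfacts[OF _ that that] q2_pos in \<open>auto intro!: AE_I2 simp: abs_mult intro!: mult_left_le\<close>)
  have h_bnd: "0 < h \<omega> \<and> h \<omega> \<le> q1 \<omega> / p" if "\<omega> \<in> space M" for \<omega>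
  proof -
    have a: "0 < p * inverse (q1 \<omega>)" using p_range q1_pos[OF that] by simp
    have b: "0 < (1 - p) * inverse (q2 \<omega>)" using p_range q2_pos[OF that] by simp
    have "h \<omega> \<le> inverse (p * inverse (q1 \<omega>))"
      unfolding h_def using a b by (intro le_imp_inverse_le) auto
    also have "\<dots> = q1 \<omega> / p" by (simp add: field_simps)
    finally show ?thesis using a b unfolding h_def by simp
  qed
  have Ih: "integrable M h"
    by (rule Bochner_Integration.integrable_bound[of _ "\<lambda>\<omega>. q1 \<omega> / p"]) (use q1_int h_bnd q1_pos p_range in \<open>auto intro!: AE_I2 simp: abs_of_pos\<close>)
  define dif where "dif = (\<lambda>rt \<omega>. q1 \<omega> * hterm1 p qt1 qt2 rt \<omega> / p + q2 \<omega> * hterm2 p qt1 qt2 rt \<omega> / (1 - p) - h \<omega>)"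
  have dif_eq: "dif rt \<omega> = p*(1-p)*(q1 \<omega>)\<^sup>2*(q2 \<omega>)\<^sup>2*(Z2*rt - Z1)\<^sup>2 /
       (((1-p)*(Z1*q1 \<omega>) + p*(Z2*q2 \<omega>)*rt)\<^sup>2 * (p*q2 \<omega> + (1-p)*q1 \<omega>))"
    if "\<omega> \<in> space M" "rt > 0" for \<omega> rt
    using diff_formula[of "q1 \<omega>" "q2 \<omega>" Z1 Z2 p rt] q1_pos[OF that(1)] q2_pos[OF that(1)] Z1_pos Z2_pos
      p_range that(2) qt1_def[OF that(1)] qt2_def[OF that(1)]
    unfolding dif_def hterm1_def hterm2_def h_def by simp
  have dif_pos: "dif rt \<omega> \<ge> 0 \<and> (rt \<noteq> r \<longrightarrow> dif rt \<omega> > 0) \<and> (rt = r \<longrightarrow> dif rt \<omega> = 0)"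
    if "\<omega> \<in> space M" "rt > 0" for \<omega> rt
  proof -
    have D: "((1-p)*(Z1*q1 \<omega>) + p*(Z2*q2 \<omega>)*rt) > 0"
      using q1_pos[OF that(1)] q2_pos[OF that(1)] Z1_pos Z2_pos p_range that(2)
      by (intro add_pos_pos mult_pos_pos) auto
    have A: "p*q2 \<omega> + (1-p)*q1 \<omega> > 0"
      using q1_pos[OF that(1)] q2_pos[OF that(1)] p_range by (intro add_pos_pos mult_pos_pos) auto
    have N: "p*(1-p)*(q1 \<omega>)\<^sup>2*(q2 \<omega>)\<^sup>2 > 0"
      using q1_pos[OF that(1)] q2_pos[OF that(1)] p_range by simp
    have rr: "rt = r \<longleftrightarrow> Z2*rt - Z1 = 0" using Z2_pos unfolding r_def by (auto simp: field_simps)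
    show ?thesis unfolding dif_eq[OF that] rr using D A N
      by (auto intro!: divide_nonneg_pos divide_pos_pos mult_pos_pos)
  qed
  have HG: "H - G rt = (\<integral>\<omega>. dif rt \<omega> \<partial>M)" if "rt \<in> {C1..C2}" for rt
  proof -
    have "(\<integral>\<omega>. dif rt \<omega> \<partial>M) = (\<integral>\<omega>. q1 \<omega> * hterm1 p qt1 qt2 rt \<omega> / p + q2 \<omega> * hterm2 p qt1 qt2 rt \<omega> / (1 - p) \<partial>M) - (\<integral>\<omega>. h \<omega> \<partial>M)"
      unfolding dif_def using I1[OF that] I2[OF that] Ih
      by (intro Bochner_Integration.integral_diff Bochner_Integration.integrable_add Bochner_Integration.integrable_divide_zero)
    also have "\<dots> = E1 rt / p + E2 rt / (1 - p) - (\<integral>\<omega>. h \<omega> \<partial>M)"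
      unfolding E1_def E2_def using I1[OF that] I2[OF that]
      by (subst Bochner_Integration.integral_add) (auto intro!: Bochner_Integration.integrable_divide_zero)
    finally show ?thesis unfolding H_def G_def G_pi_def harmonic_div_def E1_def E2_def h_def by simp
  qed
  have G_le: "G rt \<le> H" if "rt \<in> {C1..C2}" for rt
  proof -
    have "0 \<le> (\<integral>\<omega>. dif rt \<omega> \<partial>M)" using dif_pos that C_range by (intro Bochner_Integration.integral_nonneg) auto
    then show ?thesis using HG[OF that] by simp
  qed
  have r_in: "r \<in> {C1..C2}" using r_range by (simp add: r_def)
  have G_r: "G r = H"
  proof -
    have "(\<integral>\<omega>. dif r \<omega> \<partial>M) = (\<integral>\<omega>. 0 \<partial>M)"
      using dif_pos r_pos by (intro Bochner_Integration.integral_cong) auto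
    then show ?thesis using HG[OF r_in] by simp
  qed
  have G_eq: "G rt = H \<Longrightarrow> rt = r" if "rt \<in> {C1..C2}" for rt
  proof (rule ccontr)
    assume eq: "G rt = H" and ne: "rt \<noteq> r"
    have rt_pos: "rt > 0" using that C_range by auto
    have intd: "integrable M (dif rt)"
      unfolding dif_def using I1[OF that] I2[OF that] Ih by auto
    have "(\<integral>\<omega>. dif rt \<omega> \<partial>M) = 0" using HG[OF that] eq by simp
    moreover have nn: "AE \<omega> in M. 0 \<le> dif rt \<omega>"
      by (rule AE_I2) (use dif_pos rt_pos in blast)
    ultimately have ae0: "AE \<omega> in M. dif rt \<omega> = 0"
      using integral_nonneg_eq_0_iff_AE[OF intd nn] by simp
    have "AE \<omega> in M. False"
      using AE_space ae0
    proof eventually_elim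
      case (elim \<omega>)
      then show False using dif_pos[OF elim(1) rt_pos] ne by simp
    qed
    then have "AE \<omega> in M. ennreal (q1 \<omega>) = 0" by (rule AE_mp) (rule AE_I2, simp)
    then have "(\<integral>\<^sup>+\<omega>. ennreal (q1 \<omega>) \<partial>M) = (\<integral>\<^sup>+\<omega>. 0 \<partial>M)" by (intro nn_integral_cong_AE) auto
    then show False using q1_norm by simp
  qed
  have part12: "harmonic_div M p q1 q2 \<ge> (SUP rt\<in>{C1..C2}. G_pi M p q1 q2 qt1 qt2 rt)
    \<and> (\<forall>rt\<in>{C1..C2}. G_pi M p q1 q2 qt1 qt2 rt = harmonic_div M p q1 q2 \<longleftrightarrow> rt = Z1 / Z2)"
  proof
    show "harmonic_div M p q1 q2 \<ge> (SUP rt\<in>{C1..C2}. G_pi M p q1 q2 qt1 qt2 rt)"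
      using G_le C_range unfolding G_def H_def by (intro cSUP_least) auto
    show "\<forall>rt\<in>{C1..C2}. G_pi M p q1 q2 qt1 qt2 rt = harmonic_div M p q1 q2 \<longleftrightarrow> rt = Z1 / Z2"
      using G_eq G_r unfolding G_def H_def r_def by auto
  qed
  have K_pos: "1/p + 1/(1-p) > 0" using p_range by (simp add: add_pos_pos)
  define K where "K = 1/p + 1/(1-p)"
  have Kp: "K > 0" using K_pos by (simp add: K_def)
  have G_form: "G rt = 1 - (1/p) * E1 rt - (1/(1-p)) * E2 rt" for rt
    unfolding G_def G_pi_def E1_def E2_def by simp
  have Ghat_form: "Ghat_pi p qt1 qt2 n1 (\<lambda>j. X1 j x) n2 (\<lambda>j. X2 j x) rt
      = 1 - (1/p) * A1 n1 rt x - (1/(1-p)) * A2 n2 rt x" for n1 n2 x rt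
    unfolding Ghat_pi_def A1_def A2_def by simp
  have E1lip: "\<bar>E1 rt - E1 s\<bar> \<le> L * \<bar>rt - s\<bar>" if "rt \<in> {C1..C2}" "s \<in> {C1..C2}" for rt s
  proof -
    have "E1 rt - E1 s = (\<integral>\<omega>. q1 \<omega> * hterm1 p qt1 qt2 rt \<omega> - q1 \<omega> * hterm1 p qt1 qt2 s \<omega> \<partial>M)"
      unfolding E1_def using I1[OF that(1)] I1[OF that(2)] by (rule Bochner_Integration.integral_diff[symmetric])
    also have "\<bar>\<dots>\<bar> \<le> (\<integral>\<omega>. \<bar>q1 \<omega> * hterm1 p qt1 qt2 rt \<omega> - q1 \<omega> * hterm1 p qt1 qt2 s \<omega>\<bar> \<partial>M)"
      by (rule integral_abs_bound)
    also have "\<dots> \<le> (\<integral>\<omega>. q1 \<omega> * (L * \<bar>rt - s\<bar>) \<partial>M)"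
    proof (rule Bochner_Integration.integral_mono)
      show "integrable M (\<lambda>\<omega>. \<bar>q1 \<omega> * hterm1 p qt1 qt2 rt \<omega> - q1 \<omega> * hterm1 p qt1 qt2 s \<omega>\<bar>)"
        using I1[OF that(1)] I1[OF that(2)] by (intro integrable_abs Bochner_Integration.integrable_diff)
      show "integrable M (\<lambda>\<omega>. q1 \<omega> * (L * \<bar>rt - s\<bar>))" using q1_int by simp
      fix \<omega> assume w: "\<omega> \<in> space M"
      have "\<bar>q1 \<omega> * hterm1 p qt1 qt2 rt \<omega> - q1 \<omega> * hterm1 p qt1 qt2 s \<omega>\<bar>
          = q1 \<omega> * \<bar>hterm1 p qt1 qt2 rt \<omega> - hterm1 p qt1 qt2 s \<omega>\<bar>"
        using q1_pos[OF w] by (simp add: abs_mult right_diff_distrib[symmetric])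
      also have "\<dots> \<le> q1 \<omega> * (L * \<bar>rt - s\<bar>)"
        using hfacts[OF w that] q1_pos[OF w] by (intro mult_left_mono) auto
      finally show "\<bar>q1 \<omega> * hterm1 p qt1 qt2 rt \<omega> - q1 \<omega> * hterm1 p qt1 qt2 s \<omega>\<bar> \<le> q1 \<omega> * (L * \<bar>rt - s\<bar>)" .
    qed
    also have "\<dots> = L * \<bar>rt - s\<bar>" using q1_one by simp
    finally show ?thesis .
  qed
  have E2lip: "\<bar>E2 rt - E2 s\<bar> \<le> L * \<bar>rt - s\<bar>" if "rt \<in> {C1..C2}" "s \<in> {C1..C2}" for rt s
  proof -
    have "E2 rt - E2 s = (\<integral>\<omega>. q2 \<omega> * hterm2 p qt1 qt2 rt \<omega> - q2 \<omega> * hterm2 p qt1 qt2 s \<omega> \<partial>M)"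
      unfolding E2_def using I2[OF that(1)] I2[OF that(2)] by (rule Bochner_Integration.integral_diff[symmetric])
    also have "\<bar>\<dots>\<bar> \<le> (\<integral>\<omega>. \<bar>q2 \<omega> * hterm2 p qt1 qt2 rt \<omega> - q2 \<omega> * hterm2 p qt1 qt2 s \<omega>\<bar> \<partial>M)"
      by (rule integral_abs_bound)
    also have "\<dots> \<le> (\<integral>\<omega>. q2 \<omega> * (L * \<bar>rt - s\<bar>) \<partial>M)"
    proof (rule Bochner_Integration.integral_mono)
      show "integrable M (\<lambda>\<omega>. \<bar>q2 \<omega> * hterm2 p qt1 qt2 rt \<omega> - q2 \<omega> * hterm2 p qt1 qt2 s \<omega>\<bar>)"
        using I2[OF that(1)] I2[OF that(2)] by (intro integrable_abs Bochner_Integration.integrable_diff)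
      show "integrable M (\<lambda>\<omega>. q2 \<omega> * (L * \<bar>rt - s\<bar>))" using q2_int by simp
      fix \<omega> assume w: "\<omega> \<in> space M"
      have "\<bar>q2 \<omega> * hterm2 p qt1 qt2 rt \<omega> - q2 \<omega> * hterm2 p qt1 qt2 s \<omega>\<bar>
          = q2 \<omega> * \<bar>hterm2 p qt1 qt2 rt \<omega> - hterm2 p qt1 qt2 s \<omega>\<bar>"
        using q2_pos[OF w] by (simp add: abs_mult right_diff_distrib[symmetric])
      also have "\<dots> \<le> q2 \<omega> * (L * \<bar>rt - s\<bar>)"
        using hfacts[OF w that] q2_pos[OF w] by (intro mult_left_mono) auto
      finally show "\<bar>q2 \<omega> * hterm2 p qt1 qt2 rt \<omega> - q2 \<omega> * hterm2 p qt1 qt2 s \<omega>\<bar> \<le> q2 \<omega> * (L * \<bar>rt - s\<bar>)" .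
    qed
    also have "\<dots> = L * \<bar>rt - s\<bar>" using q2_one by simp
    finally show ?thesis .
  qed
  have comb: "\<bar>1 - (1/p) * a1 - (1/(1-p)) * a2 - (1 - (1/p) * b1 - (1/(1-p)) * b2)\<bar> \<le> K * B"
    if "\<bar>a1 - b1\<bar> \<le> B" "\<bar>a2 - b2\<bar> \<le> B" for a1 a2 b1 b2 B
  proof -
    have "\<bar>1 - (1/p) * a1 - (1/(1-p)) * a2 - (1 - (1/p) * b1 - (1/(1-p)) * b2)\<bar>
        = \<bar>(1/p) * (b1 - a1) + (1/(1-p)) * (b2 - a2)\<bar>"
    proof -
      have gen: "\<bar>1 - u * a1 - v * a2 - (1 - u * b1 - v * b2)\<bar> = \<bar>u * (b1 - a1) + v * (b2 - a2)\<bar>" for u v :: real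
        by (simp add: algebra_simps)
      show ?thesis by (rule gen)
    qed
    also have "\<dots> \<le> (1/p) * \<bar>b1 - a1\<bar> + (1/(1-p)) * \<bar>b2 - a2\<bar>"
      using p_range by (simp add: abs_mult abs_triangle_ineq[THEN order_trans])
    also have "\<dots> \<le> (1/p) * B + (1/(1-p)) * B"
      using that p_range by (intro add_mono mult_left_mono) (auto simp: abs_minus_commute)
    finally show ?thesis by (simp add: K_def algebra_simps)
  qed
  have Glip: "\<bar>G rt - G s\<bar> \<le> K * L * \<bar>rt - s\<bar>" if "rt \<in> {C1..C2}" "s \<in> {C1..C2}" for rt s
    unfolding G_form using comb[OF E1lip[OF that] E2lip[OF that]] by (simp add: mult.assoc)
  have A1lip: "\<bar>A1 n rt x - A1 n s x\<bar> \<le> L * \<bar>rt - s\<bar>"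
    if "x \<in> space P" "rt \<in> {C1..C2}" "s \<in> {C1..C2}" for n rt s x
  proof (cases "n = 0")
    case True then show ?thesis using L_pos by (simp add: A1_def)
  next
    case False
    have "A1 n rt x - A1 n s x = (\<Sum>j<n. hterm1 p qt1 qt2 rt (X1 j x) - hterm1 p qt1 qt2 s (X1 j x)) / real n"
      unfolding A1_def by (simp add: sum_subtractf diff_divide_distrib)
    also have "\<bar>\<dots>\<bar> \<le> (\<Sum>j<n. \<bar>hterm1 p qt1 qt2 rt (X1 j x) - hterm1 p qt1 qt2 s (X1 j x)\<bar>) / real n"
      using False by (simp add: divide_right_mono sum_abs)
    also have "\<dots> \<le> (real n * (L * \<bar>rt - s\<bar>)) / real n"
    proof (intro divide_right_mono)
      show "(\<Sum>j<n. \<bar>hterm1 p qt1 qt2 rt (X1 j x) - hterm1 p qt1 qt2 s (X1 j x)\<bar>) \<le> real n * (L * \<bar>rt - s\<bar>)"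
        using sum_bounded_above[of "{..<n}" "\<lambda>j. \<bar>hterm1 p qt1 qt2 rt (X1 j x) - hterm1 p qt1 qt2 s (X1 j x)\<bar>" "L * \<bar>rt - s\<bar>"]
          hfacts[OF measurable_space[OF X1_meas that(1)] that(2,3)] by simp
    qed simp
    also have "\<dots> = L * \<bar>rt - s\<bar>" using False by simp
    finally show ?thesis .
  qed
  have A2lip: "\<bar>A2 n rt x - A2 n s x\<bar> \<le> L * \<bar>rt - s\<bar>"
    if "x \<in> space P" "rt \<in> {C1..C2}" "s \<in> {C1..C2}" for n rt s x
  proof (cases "n = 0")
    case True then show ?thesis using L_pos by (simp add: A2_def)
  next
    case False
    have "A2 n rt x - A2 n s x = (\<Sum>j<n. hterm2 p qt1 qt2 rt (X2 j x) - hterm2 p qt1 qt2 s (X2 j x)) / real n"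
      unfolding A2_def by (simp add: sum_subtractf diff_divide_distrib)
    also have "\<bar>\<dots>\<bar> \<le> (\<Sum>j<n. \<bar>hterm2 p qt1 qt2 rt (X2 j x) - hterm2 p qt1 qt2 s (X2 j x)\<bar>) / real n"
      using False by (simp add: divide_right_mono sum_abs)
    also have "\<dots> \<le> (real n * (L * \<bar>rt - s\<bar>)) / real n"
    proof (intro divide_right_mono)
      show "(\<Sum>j<n. \<bar>hterm2 p qt1 qt2 rt (X2 j x) - hterm2 p qt1 qt2 s (X2 j x)\<bar>) \<le> real n * (L * \<bar>rt - s\<bar>)"
        using sum_bounded_above[of "{..<n}" "\<lambda>j. \<bar>hterm2 p qt1 qt2 rt (X2 j x) - hterm2 p qt1 qt2 s (X2 j x)\<bar>" "L * \<bar>rt - s\<bar>"]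
          hfacts[OF measurable_space[OF X2_meas that(1)] that(2,3)] by simp
    qed simp
    also have "\<dots> = L * \<bar>rt - s\<bar>" using False by simp
    finally show ?thesis .
  qed
  have unif: "\<exists>\<eta>>0. \<exists>S. finite S \<and> S \<subseteq> {C1..C2} \<and> (\<forall>n1 n2. \<forall>x\<in>space P.
       (\<forall>s\<in>S. \<bar>A1 n1 s x - E1 s\<bar> < \<eta> \<and> \<bar>A2 n2 s x - E2 s\<bar> < \<eta>) \<longrightarrow>
       (\<forall>rt\<in>{C1..C2}. \<bar>Ghat_pi p qt1 qt2 n1 (\<lambda>j. X1 j x) n2 (\<lambda>j. X2 j x) rt - G rt\<bar> \<le> \<tau>))"
    if tau: "\<tau> > 0" for \<tau>
  proof -
    define \<eta> where "\<eta> = \<tau> / (2 * K)"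
    define \<delta> where "\<delta> = \<tau> / (4 * K * L)"
    have eta: "\<eta> > 0" unfolding \<eta>_def using tau Kp by (intro divide_pos_pos mult_pos_pos) auto
    have delta: "\<delta> > 0" unfolding \<delta>_def using tau Kp L_pos by (intro divide_pos_pos mult_pos_pos) auto
    have tb: "\<forall>e>0. \<exists>k. finite k \<and> k \<subseteq> {C1..C2} \<and> {C1..C2} \<subseteq> (\<Union>x\<in>k. ball x e)"
      by (rule seq_compact_imp_totally_bounded[OF compact_imp_seq_compact[OF compact_Icc]])
    obtain S where S0: "finite S \<and> S \<subseteq> {C1..C2} \<and> {C1..C2} \<subseteq> (\<Union>x\<in>S. ball x \<delta>)"
      using tb[rule_format, OF delta] by (elim exE)
    have S: "finite S" "S \<subseteq> {C1..C2}" "{C1..C2} \<subseteq> (\<Union>x\<in>S. ball x \<delta>)" using S0 by auto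
    have KB: "K * (2 * (L * \<delta>) + \<eta>) = \<tau>"
      using Kp L_pos unfolding \<eta>_def \<delta>_def by (simp add: field_simps)
    show ?thesis
    proof (intro exI[of _ \<eta>] conjI eta exI[of _ S] S(1) S(2) allI ballI impI)
      fix n1 n2 x rt
      assume x: "x \<in> space P" and good: "\<forall>s\<in>S. \<bar>A1 n1 s x - E1 s\<bar> < \<eta> \<and> \<bar>A2 n2 s x - E2 s\<bar> < \<eta>"
        and rt: "rt \<in> {C1..C2}"
      obtain s where s: "s \<in> S" "dist s rt < \<delta>" using S(3) rt by force
      have sI: "s \<in> {C1..C2}" using S(2) s(1) by auto
      have d: "\<bar>rt - s\<bar> \<le> \<delta>" using s(2) by (simp add: dist_real_def abs_minus_commute)
      have b1: "\<bar>A1 n1 rt x - E1 rt\<bar> \<le> 2 * (L * \<delta>) + \<eta>"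
      proof -
        have "\<bar>A1 n1 rt x - E1 rt\<bar> \<le> \<bar>A1 n1 rt x - A1 n1 s x\<bar> + \<bar>A1 n1 s x - E1 s\<bar> + \<bar>E1 s - E1 rt\<bar>"
          by linarith
        moreover have "\<bar>A1 n1 rt x - A1 n1 s x\<bar> \<le> L * \<delta>"
          using A1lip[OF x rt sI] d L_pos by (meson mult_left_mono less_imp_le order_trans)
        moreover have "\<bar>E1 s - E1 rt\<bar> \<le> L * \<delta>"
          using E1lip[OF sI rt] d L_pos by (metis abs_minus_commute mult_left_mono less_imp_le order_trans)
        ultimately show ?thesis using good s(1) by fastforce
      qed
      have b2: "\<bar>A2 n2 rt x - E2 rt\<bar> \<le> 2 * (L * \<delta>) + \<eta>"
      proof -
        have "\<bar>A2 n2 rt x - E2 rt\<bar> \<le> \<bar>A2 n2 rt x - A2 n2 s x\<bar> + \<bar>A2 n2 s x - E2 s\<bar> + \<bar>E2 s - E2 rt\<bar>"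
          by linarith
        moreover have "\<bar>A2 n2 rt x - A2 n2 s x\<bar> \<le> L * \<delta>"
          using A2lip[OF x rt sI] d L_pos by (meson mult_left_mono less_imp_le order_trans)
        moreover have "\<bar>E2 s - E2 rt\<bar> \<le> L * \<delta>"
          using E2lip[OF sI rt] d L_pos by (metis abs_minus_commute mult_left_mono less_imp_le order_trans)
        ultimately show ?thesis using good s(1) by fastforce
      qed
      show "\<bar>Ghat_pi p qt1 qt2 n1 (\<lambda>j. X1 j x) n2 (\<lambda>j. X2 j x) rt - G rt\<bar> \<le> \<tau>"
        unfolding Ghat_form G_form using comb[OF b1 b2] KB by simp
    qed
  qed
  have Gcont: "continuous_on {C1..C2} G"
  proof (rule lipschitz_on_continuous_on)
    show "(K * L)-lipschitz_on {C1..C2} G"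
      using Glip Kp L_pos by (intro lipschitz_onI) (auto simp: dist_real_def)
  qed
  have sep: "\<exists>\<gamma>>0. \<forall>rt\<in>{C1..C2}. \<epsilon> \<le> \<bar>rt - r\<bar> \<longrightarrow> G rt \<le> H - \<gamma>" if eps: "\<epsilon> > 0" for \<epsilon>
  proof -
    define Ks where "Ks = {C1..C2} \<inter> {rt. \<epsilon> \<le> \<bar>rt - r\<bar>}"
    have cK: "compact Ks" unfolding Ks_def
      by (intro compact_Int_closed compact_Icc closed_Collect_le continuous_intros)
    show ?thesis
    proof (cases "Ks = {}")
      case True
      then show ?thesis unfolding Ks_def by (intro exI[of _ 1]) auto
    next
      case False
      obtain m where m: "m \<in> Ks" "\<And>y. y \<in> Ks \<Longrightarrow> G y \<le> G m"
        using continuous_attains_sup[OF cK False continuous_on_subset[OF Gcont]] unfolding Ks_def by auto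
      have mI: "m \<in> {C1..C2}" and mr: "m \<noteq> r" using m(1) eps unfolding Ks_def by auto
      have "G m < H" using G_le[OF mI] G_eq[OF mI] mr by fastforce
      then show ?thesis using m unfolding Ks_def by (intro exI[of _ "H - G m"]) auto
    qed
  qed
  have finP: "finite_measure P" using P_prob by (simp add: prob_space_def)
  have B1m: "{x \<in> space P. \<eta> \<le> \<bar>A1 n s x - E1 s\<bar>} \<in> sets P" for \<eta> n s
    unfolding A1_def by measurable
  have B2m: "{x \<in> space P. \<eta> \<le> \<bar>A2 n s x - E2 s\<bar>} \<in> sets P" for \<eta> n s
    unfolding A2_def by measurable
  have l1: "((\<lambda>n. measure P {x \<in> space P. \<eta> \<le> \<bar>A1 n s x - E1 s\<bar>}) \<longlongrightarrow> 0) sequentially"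
    if "\<eta> > 0" "s \<in> {C1..C2}" for \<eta> s
    unfolding A1_def E1_def
    by (rule wlln01[OF P_prob X1_meas X1_indep X1_distr q1_meas _ h1m _ that(1)])
       (use q1_pos hfacts that(2) in \<open>auto intro: less_imp_le\<close>)
  have l2: "((\<lambda>n. measure P {x \<in> space P. \<eta> \<le> \<bar>A2 n s x - E2 s\<bar>}) \<longlongrightarrow> 0) sequentially"
    if "\<eta> > 0" "s \<in> {C1..C2}" for \<eta> s
    unfolding A2_def E2_def
    by (rule wlln01[OF P_prob X2_meas X2_indep X2_distr q2_meas _ h2m _ that(1)])
       (use q2_pos hfacts that(2) in \<open>auto intro: less_imp_le\<close>)
  have part3: "\<forall>\<epsilon>>0. ((\<lambda>(n1, n2). measure P {x \<in> space P. \<epsilon> < \<bar>rhat n1 n2 x - r\<bar>})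
                  \<longlongrightarrow> 0) (sequentially \<times>\<^sub>F sequentially)"
  proof (intro allI impI)
    fix \<epsilon> :: real assume eps: "\<epsilon> > 0"
    obtain \<gamma> where gam: "\<gamma> > 0" "\<And>rt. rt \<in> {C1..C2} \<Longrightarrow> \<epsilon> \<le> \<bar>rt - r\<bar> \<Longrightarrow> G rt \<le> H - \<gamma>"
      using sep[OF eps] by blast
    obtain \<eta> S where eta: "\<eta> > 0" and S: "finite S" "S \<subseteq> {C1..C2}"
      and U: "\<And>n1 n2 x. x \<in> space P \<Longrightarrow> (\<forall>s\<in>S. \<bar>A1 n1 s x - E1 s\<bar> < \<eta> \<and> \<bar>A2 n2 s x - E2 s\<bar> < \<eta>) \<Longrightarrow>
          (\<forall>rt\<in>{C1..C2}. \<bar>Ghat_pi p qt1 qt2 n1 (\<lambda>j. X1 j x) n2 (\<lambda>j. X2 j x) rt - G rt\<bar> \<le> \<gamma>/3)"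
      using unif[of "\<gamma>/3"] gam(1) by auto
    show "((\<lambda>(n1, n2). measure P {x \<in> space P. \<epsilon> < \<bar>rhat n1 n2 x - r\<bar>}) \<longlongrightarrow> 0) (sequentially \<times>\<^sub>F sequentially)"
    proof (rule prod_lim[where Ba="\<lambda>n s. {x \<in> space P. \<eta> \<le> \<bar>A1 n s x - E1 s\<bar>}"
          and Bb="\<lambda>n s. {x \<in> space P. \<eta> \<le> \<bar>A2 n s x - E2 s\<bar>}", OF finP S(1)])
      show "\<And>n s. s \<in> S \<Longrightarrow> {x \<in> space P. \<eta> \<le> \<bar>A1 n s x - E1 s\<bar>} \<in> sets P" by (rule B1m)
      show "\<And>n s. s \<in> S \<Longrightarrow> {x \<in> space P. \<eta> \<le> \<bar>A2 n s x - E2 s\<bar>} \<in> sets P" by (rule B2m)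
      show "\<And>s. s \<in> S \<Longrightarrow> ((\<lambda>n. measure P {x \<in> space P. \<eta> \<le> \<bar>A1 n s x - E1 s\<bar>}) \<longlongrightarrow> 0) sequentially"
        using l1 eta S(2) by auto
      show "\<And>s. s \<in> S \<Longrightarrow> ((\<lambda>n. measure P {x \<in> space P. \<eta> \<le> \<bar>A2 n s x - E2 s\<bar>}) \<longlongrightarrow> 0) sequentially"
        using l2 eta S(2) by auto
      fix n1 n2
      show "{x \<in> space P. \<epsilon> < \<bar>rhat n1 n2 x - r\<bar>} \<subseteq>
          (\<Union>s\<in>S. {x \<in> space P. \<eta> \<le> \<bar>A1 n1 s x - E1 s\<bar>}) \<union> (\<Union>s\<in>S. {x \<in> space P. \<eta> \<le> \<bar>A2 n2 s x - E2 s\<bar>})"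
      proof (rule subsetI, rule ccontr)
        fix x assume xT: "x \<in> {x \<in> space P. \<epsilon> < \<bar>rhat n1 n2 x - r\<bar>}"
          and nb: "x \<notin> (\<Union>s\<in>S. {x \<in> space P. \<eta> \<le> \<bar>A1 n1 s x - E1 s\<bar>}) \<union> (\<Union>s\<in>S. {x \<in> space P. \<eta> \<le> \<bar>A2 n2 s x - E2 s\<bar>})"
        have x: "x \<in> space P" and far: "\<epsilon> < \<bar>rhat n1 n2 x - r\<bar>" using xT by auto
        have good: "\<forall>s\<in>S. \<bar>A1 n1 s x - E1 s\<bar> < \<eta> \<and> \<bar>A2 n2 s x - E2 s\<bar> < \<eta>"
          using nb x by auto
        note Ux = U[OF x good]
        define rh where "rh = rhat n1 n2 x"
        have rhI: "rh \<in> {C1..C2}" using rhat_range[OF x] by (simp add: rh_def)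
        let ?Gh = "Ghat_pi p qt1 qt2 n1 (\<lambda>j. X1 j x) n2 (\<lambda>j. X2 j x)"
        have "?Gh r \<le> ?Gh rh" unfolding rh_def by (rule rhat_argmax[OF x r_in])
        moreover have "\<bar>?Gh r - G r\<bar> \<le> \<gamma>/3" using Ux r_in by blast
        moreover have "\<bar>?Gh rh - G rh\<bar> \<le> \<gamma>/3" using Ux rhI by blast
        moreover have "G rh \<le> H - \<gamma>" using gam(2)[OF rhI] far by (simp add: rh_def)
        ultimately show False using G_r gam(1) by linarith
      qed
    qed
  qed
  have part4: "\<forall>\<epsilon>>0. ((\<lambda>(n1, n2). measure P {x \<in> space P. \<epsilon> <
                  \<bar>Ghat_pi p qt1 qt2 n1 (\<lambda>j. X1 j x) n2 (\<lambda>j. X2 j x) (rhat n1 n2 x) - H\<bar>})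
                  \<longlongrightarrow> 0) (sequentially \<times>\<^sub>F sequentially)"
  proof (intro allI impI)
    fix \<epsilon> :: real assume eps: "\<epsilon> > 0"
    obtain \<eta> S where eta: "\<eta> > 0" and S: "finite S" "S \<subseteq> {C1..C2}"
      and U: "\<And>n1 n2 x. x \<in> space P \<Longrightarrow> (\<forall>s\<in>S. \<bar>A1 n1 s x - E1 s\<bar> < \<eta> \<and> \<bar>A2 n2 s x - E2 s\<bar> < \<eta>) \<Longrightarrow>
          (\<forall>rt\<in>{C1..C2}. \<bar>Ghat_pi p qt1 qt2 n1 (\<lambda>j. X1 j x) n2 (\<lambda>j. X2 j x) rt - G rt\<bar> \<le> \<epsilon>/2)"
      using unif[of "\<epsilon>/2"] eps by auto
    show "((\<lambda>(n1, n2). measure P {x \<in> space P. \<epsilon> <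
                  \<bar>Ghat_pi p qt1 qt2 n1 (\<lambda>j. X1 j x) n2 (\<lambda>j. X2 j x) (rhat n1 n2 x) - H\<bar>})
                  \<longlongrightarrow> 0) (sequentially \<times>\<^sub>F sequentially)"
    proof (rule prod_lim[where Ba="\<lambda>n s. {x \<in> space P. \<eta> \<le> \<bar>A1 n s x - E1 s\<bar>}"
          and Bb="\<lambda>n s. {x \<in> space P. \<eta> \<le> \<bar>A2 n s x - E2 s\<bar>}", OF finP S(1)])
      show "\<And>n s. s \<in> S \<Longrightarrow> {x \<in> space P. \<eta> \<le> \<bar>A1 n s x - E1 s\<bar>} \<in> sets P" by (rule B1m)
      show "\<And>n s. s \<in> S \<Longrightarrow> {x \<in> space P. \<eta> \<le> \<bar>A2 n s x - E2 s\<bar>} \<in> sets P" by (rule B2m)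
      show "\<And>s. s \<in> S \<Longrightarrow> ((\<lambda>n. measure P {x \<in> space P. \<eta> \<le> \<bar>A1 n s x - E1 s\<bar>}) \<longlongrightarrow> 0) sequentially"
        using l1 eta S(2) by auto
      show "\<And>s. s \<in> S \<Longrightarrow> ((\<lambda>n. measure P {x \<in> space P. \<eta> \<le> \<bar>A2 n s x - E2 s\<bar>}) \<longlongrightarrow> 0) sequentially"
        using l2 eta S(2) by auto
      fix n1 n2
      show "{x \<in> space P. \<epsilon> < \<bar>Ghat_pi p qt1 qt2 n1 (\<lambda>j. X1 j x) n2 (\<lambda>j. X2 j x) (rhat n1 n2 x) - H\<bar>} \<subseteq>
          (\<Union>s\<in>S. {x \<in> space P. \<eta> \<le> \<bar>A1 n1 s x - E1 s\<bar>}) \<union> (\<Union>s\<in>S. {x \<in> space P. \<eta> \<le> \<bar>A2 n2 s x - E2 s\<bar>})"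
      proof (rule subsetI, rule ccontr)
        fix x assume xT: "x \<in> {x \<in> space P. \<epsilon> < \<bar>Ghat_pi p qt1 qt2 n1 (\<lambda>j. X1 j x) n2 (\<lambda>j. X2 j x) (rhat n1 n2 x) - H\<bar>}"
          and nb: "x \<notin> (\<Union>s\<in>S. {x \<in> space P. \<eta> \<le> \<bar>A1 n1 s x - E1 s\<bar>}) \<union> (\<Union>s\<in>S. {x \<in> space P. \<eta> \<le> \<bar>A2 n2 s x - E2 s\<bar>})"
        have x: "x \<in> space P" and far: "\<epsilon> < \<bar>Ghat_pi p qt1 qt2 n1 (\<lambda>j. X1 j x) n2 (\<lambda>j. X2 j x) (rhat n1 n2 x) - H\<bar>"
          using xT by auto
        have good: "\<forall>s\<in>S. \<bar>A1 n1 s x - E1 s\<bar> < \<eta> \<and> \<bar>A2 n2 s x - E2 s\<bar> < \<eta>"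
          using nb x by auto
        note Ux = U[OF x good]
        define rh where "rh = rhat n1 n2 x"
        have rhI: "rh \<in> {C1..C2}" using rhat_range[OF x] by (simp add: rh_def)
        let ?Gh = "Ghat_pi p qt1 qt2 n1 (\<lambda>j. X1 j x) n2 (\<lambda>j. X2 j x)"
        have "?Gh r \<le> ?Gh rh" unfolding rh_def by (rule rhat_argmax[OF x r_in])
        moreover have "\<bar>?Gh r - G r\<bar> \<le> \<epsilon>/2" using Ux r_in by blast
        moreover have "\<bar>?Gh rh - G rh\<bar> \<le> \<epsilon>/2" using Ux rhI by blast
        moreover have "G rh \<le> H" using G_le[OF rhI] .
        moreover have "\<epsilon> < \<bar>?Gh rh - H\<bar>" using far by (simp add: rh_def)
        ultimately show False using G_r eps by linarith
      qed
    qed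
  qed
  show ?thesis using part12 part3 part4 unfolding r_def H_def by blast
qed

end
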